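(* Fix $r\in\mathbb{N}$. Let $\sigma:\mathbb{R}\to\mathbb{R}$ be continuous and discriminatory. Then $\mathcal{N}_r(\sigma,\mathbb{Z}^r,\mathbb{Z})=\mathrm{span}\{x\mapsto\sigma(m^{\mathrm T}x+k): m\in\mathbb{Z}^r,\ k\in\mathbb{Z}\}$ is dense in $C(\mathbb{R}^r)$ in the sense of uniform convergence on compact sets, i.e. for every nonempty compact $K\subset\mathbb{R}^r$, every $g\in C(\mathbb{R}^r)$ and every $\varepsilon>0$ there is $s\in\mathcal{N}_r(\sigma,\mathbb{Z}^r,\mathbb{Z})$ with $\sup_{x\in K}|s(x)-g(x)|<\varepsilon$.
   Context: For a nonempty compact $X\subset\mathbb{R}^r$ (with subspace topology), $M(X)$ denotes the set of regular signed Borel measures on $X$, i.e. finite signed measures $\mu$ on the Borel $\sigma$-algebra of $X$ whose positive and negative variations are regular Borel measures. A function $\sigma:\mathbb{R}\to\mathbb{R}$ is discriminatory (for $r$) if for every nonempty compact $X\subset\mathbb{R}^r$ and every $\mu\in M(X)$: if $\int_X\sigma(m^{\mathrm T}x+k)\,d\mu(x)=0$ for all $m\in\mathbb{Z}^r$, $k\in\mathbb{Z}$, then $\mu=0$. *)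

theory Defs
  imports "HOL-Analysis.Analysis"
begin

definition int_vecs :: "(real ^ 'n) set" where
  "int_vecs = {m. \<forall>i. m $ i \<in> \<int>}"

definition regular_finite_borel :: "(real ^ 'n) set \<Rightarrow> (real ^ 'n) measure \<Rightarrow> bool" where
  "regular_finite_borel X M \<longleftrightarrow>
     sets M = sets (restrict_space borel X) \<and> finite_measure M \<and>
     (\<forall>A \<in> sets M.
        emeasure M A = (SUP K \<in> {K. compact K \<and> K \<subseteq> A}. emeasure M K) \<and>
        emeasure M A = (INF U \<in> {U. openin (top_of_set X) U \<and> A \<subseteq> U}. emeasure M U))"

text \<open>A regular signed Borel measure mu on X is represented as a difference
  M1 - M2 of two finite regular Borel measures on X (every such difference is
  a regular signed measure, and the Jordan decomposition shows every regular
  signed measure arises this way).\<close>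
definition discriminatory :: "(real \<Rightarrow> real) \<Rightarrow> 'n::finite itself \<Rightarrow> bool" where
  "discriminatory \<sigma> (_ :: 'n itself) \<longleftrightarrow>
     (\<forall>(X :: (real ^ 'n) set) M1 M2.
        X \<noteq> {} \<and> compact X \<and> regular_finite_borel X M1 \<and> regular_finite_borel X M2 \<and>
        (\<forall>m \<in> int_vecs. \<forall>k \<in> \<int>.
           (\<integral>x. \<sigma> (m \<bullet> x + k) \<partial>M1) - (\<integral>x. \<sigma> (m \<bullet> x + k) \<partial>M2) = 0)
        \<longrightarrow> (\<forall>A \<in> sets M1. measure M1 A - measure M2 A = 0))"

definition NN :: "(real \<Rightarrow> real) \<Rightarrow> (real ^ 'n \<Rightarrow> real) set" where
  "NN \<sigma> = {s. \<exists>F c. finite F \<and> F \<subseteq> int_vecs \<times> \<int> \<and>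
                 s = (\<lambda>x. \<Sum>p\<in>F. c p * \<sigma> (fst p \<bullet> x + snd p))}"

end

theory Submission
  imports Defs "HOL-Probability.Probability"
begin

lemma NN_zero: "(\<lambda>x. 0) \<in> NN \<sigma>"
  unfolding NN_def by (rule CollectI, rule exI[of _ "{}"], auto)

lemma NN_gen:
  assumes "m \<in> int_vecs" "k \<in> \<int>"
  shows "(\<lambda>x. \<sigma> (m \<bullet> x + k)) \<in> NN \<sigma>"
  unfolding NN_def
  apply (rule CollectI, rule exI[of _ "{(m,k)}"], rule exI[of _ "\<lambda>_. 1"])
  using assms by auto

lemma NN_scale:
  assumes "s \<in> NN \<sigma>"
  shows "(\<lambda>x. a * s x) \<in> NN \<sigma>"
proof -
  from assms obtain F c where F: "finite F" "F \<subseteq> int_vecs \<times> \<int>"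
    and s: "s = (\<lambda>x. \<Sum>p\<in>F. c p * \<sigma> (fst p \<bullet> x + snd p))"
    unfolding NN_def by blast
  show ?thesis unfolding NN_def
    apply (rule CollectI, rule exI[of _ F], rule exI[of _ "\<lambda>p. a * c p"])
    using F by (auto simp: s sum_distrib_left mult.assoc)
qed

lemma NN_add:
  assumes "s \<in> NN \<sigma>" "s' \<in> NN \<sigma>"
  shows "(\<lambda>x. s x + s' x) \<in> NN \<sigma>"
proof -
  from assms(1) obtain F c where F: "finite F" "F \<subseteq> int_vecs \<times> \<int>"
    and s: "s = (\<lambda>x. \<Sum>p\<in>F. c p * \<sigma> (fst p \<bullet> x + snd p))"
    unfolding NN_def by blast
  from assms(2) obtain F' c' where F': "finite F'" "F' \<subseteq> int_vecs \<times> \<int>"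
    and s': "s' = (\<lambda>x. \<Sum>p\<in>F'. c' p * \<sigma> (fst p \<bullet> x + snd p))"
    unfolding NN_def by blast
  define d where "d p = (if p \<in> F then c p else 0) + (if p \<in> F' then c' p else 0)" for p
  have "(\<lambda>x. s x + s' x) = (\<lambda>x. \<Sum>p\<in>F \<union> F'. d p * \<sigma> (fst p \<bullet> x + snd p))"
  proof
    fix x
    have 1: "(\<Sum>p\<in>F \<union> F'. (if p \<in> F then c p else 0) * \<sigma> (fst p \<bullet> x + snd p))
          = (\<Sum>p\<in>F. c p * \<sigma> (fst p \<bullet> x + snd p))"
      using F F' by (intro sum.mono_neutral_cong_right) auto
    have 2: "(\<Sum>p\<in>F \<union> F'. (if p \<in> F' then c' p else 0) * \<sigma> (fst p \<bullet> x + snd p))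
          = (\<Sum>p\<in>F'. c' p * \<sigma> (fst p \<bullet> x + snd p))"
      using F F' by (intro sum.mono_neutral_cong_right) auto
    show "s x + s' x = (\<Sum>p\<in>F \<union> F'. d p * \<sigma> (fst p \<bullet> x + snd p))"
      unfolding s s' d_def distrib_right sum.distrib using 1 2 by simp
  qed
  then show ?thesis unfolding NN_def using F F' by blast
qed

lemma NN_sum:
  assumes "finite I" "\<And>i. i \<in> I \<Longrightarrow> f i \<in> NN \<sigma>"
  shows "(\<lambda>x. \<Sum>i\<in>I. f i x) \<in> NN \<sigma>"
  using assms
proof (induction I rule: finite_induct)
  case empty
  then show ?case using NN_zero by simp
next
  case (insert a I)
  then show ?case using NN_add[of "f a" \<sigma> "\<lambda>x. \<Sum>i\<in>I. f i x"] by simp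
qed

inductive_set ER :: "(real ^ 'n \<Rightarrow> real) set" where
  gen: "m \<in> int_vecs \<Longrightarrow> (\<lambda>x. exp (m \<bullet> x)) \<in> ER"
| scl: "f \<in> ER \<Longrightarrow> (\<lambda>x. c * f x) \<in> ER"
| add: "f \<in> ER \<Longrightarrow> g \<in> ER \<Longrightarrow> (\<lambda>x. f x + g x) \<in> ER"

lemma int_vecs_add: "a \<in> int_vecs \<Longrightarrow> b \<in> int_vecs \<Longrightarrow> a + b \<in> int_vecs"
  unfolding int_vecs_def by auto

lemma int_vecs_zero: "0 \<in> int_vecs"
  unfolding int_vecs_def by auto

lemma int_vecs_axis: "axis i 1 \<in> int_vecs"
  unfolding int_vecs_def axis_def by auto

lemma ER_mult_gen:
  assumes "m \<in> int_vecs" "g \<in> ER"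
  shows "(\<lambda>x. exp (m \<bullet> x) * g x) \<in> ER"
  using assms(2)
proof induction
  case (gen m')
  have "(\<lambda>x. exp (m \<bullet> x) * exp (m' \<bullet> x)) = (\<lambda>x. exp ((m + m') \<bullet> x))"
    by (simp add: inner_add_left exp_add)
  then show ?case using ER.gen[OF int_vecs_add[OF assms(1) gen]] by simp
next
  case (scl f c)
  then show ?case using ER.scl[OF scl.IH, of c] by (simp add: algebra_simps)
next
  case (add f g)
  then show ?case using ER.add[OF add.IH] by (simp add: algebra_simps)
qed

lemma ER_mult:
  assumes "f \<in> ER" "g \<in> ER"
  shows "(\<lambda>x. f x * g x) \<in> ER"
  using assms(1)
proof induction
  case (gen m)
  then show ?case using ER_mult_gen[OF gen assms(2)] by simp
next
  case (scl f c)
  then show ?case using ER.scl[OF scl.IH, of c] by (simp add: algebra_simps)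
next
  case (add f g')
  then show ?case using ER.add[OF add.IH] by (simp add: algebra_simps)
qed

lemma ER_const: "(\<lambda>x. c) \<in> ER"
  using ER.scl[OF ER.gen[OF int_vecs_zero], of c] by simp

lemma ER_cont: "f \<in> ER \<Longrightarrow> continuous_on S f"
  by (induction rule: ER.induct) (auto intro!: continuous_intros)

lemma ER_sep:
  fixes x y :: "real ^ 'n"
  assumes "x \<noteq> y" shows "\<exists>f\<in>ER. f x \<noteq> f y"
proof -
  obtain i where "x $ i \<noteq> y $ i" using assms by (auto simp: vec_eq_iff)
  then show ?thesis
    by (intro bexI[OF _ ER.gen[OF int_vecs_axis[of i]]]) (simp add: inner_axis')
qed

lemma ER_SW:
  fixes K :: "(real ^ 'n) set"
  assumes "compact K" "continuous_on K g" "\<epsilon> > 0"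
  shows "\<exists>f\<in>ER. \<forall>x\<in>K. \<bar>f x - g x\<bar> < \<epsilon>"
proof -
  interpret function_ring_on ER K
  proof unfold_locales
    show "compact K" by (rule assms(1))
  next
    fix f :: "real ^ 'n \<Rightarrow> real" assume "f \<in> ER" then show "continuous_on K f" by (rule ER_cont)
  next
    fix f g :: "real ^ 'n \<Rightarrow> real" assume "f \<in> ER" "g \<in> ER" then show "(\<lambda>x. f x + g x) \<in> ER" by (rule ER.add)
  next
    fix f g :: "real ^ 'n \<Rightarrow> real" assume "f \<in> ER" "g \<in> ER" then show "(\<lambda>x. f x * g x) \<in> ER" by (rule ER_mult)
  next
    fix c show "(\<lambda>_. c) \<in> ER" by (rule ER_const)
  next
    fix x y :: "real ^ 'n" assume "x \<noteq> y" then show "\<exists>f\<in>ER. f x \<noteq> f y" by (rule ER_sep)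
  qed
  obtain F where F: "F \<in> UNIV \<rightarrow> ER" "uniform_limit K F g sequentially"
    using Stone_Weierstrass[OF assms(2)] by blast
  then have "\<forall>\<^sub>F n in sequentially. \<forall>x\<in>K. dist (F n x) (g x) < \<epsilon>"
    using assms(3) uniform_limitD by blast
  then obtain n where "\<forall>x\<in>K. dist (F n x) (g x) < \<epsilon>"
    unfolding eventually_sequentially by blast
  then show ?thesis using F(1) by (auto simp: dist_real_def)
qed

definition clampT :: "real \<Rightarrow> real \<Rightarrow> real" where
  "clampT R t = max (-R) (min R t)"

definition Ee :: "real \<Rightarrow> (real \<Rightarrow> real) \<Rightarrow> real \<Rightarrow> real" where
  "Ee R f u = max 0 (min 1 u) * f (clampT R (u - (R+1))) - max 0 (min 1 (-u)) * f (clampT R (u + (R+1)))"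

lemma clampT_in: "R \<ge> 0 \<Longrightarrow> clampT R t \<in> {-R..R}"
  unfolding clampT_def by auto

lemma clampT_id: "t \<in> {-R..R} \<Longrightarrow> clampT R t = t"
  unfolding clampT_def by auto

lemma continuous_clampT [continuous_intros]:
  "continuous_on S g \<Longrightarrow> continuous_on S (\<lambda>x. clampT R (g x))"
  unfolding clampT_def by (intro continuous_intros)

lemma Ee_cont:
  assumes "continuous_on UNIV f"
  shows "continuous_on UNIV (Ee R f)"
proof -
  have c: "continuous_on UNIV (\<lambda>u. f (clampT R (g u)))" if "continuous_on UNIV g" for g :: "real \<Rightarrow> real"
    using continuous_on_compose2[OF assms continuous_clampT[OF that]] by auto
  show ?thesis unfolding Ee_def
    by (intro continuous_intros c)
qed

lemma Ee_isCont: "continuous_on UNIV f \<Longrightarrow> isCont (Ee R f) x"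
  using Ee_cont continuous_on_eq_continuous_at by blast

lemma Ee_bound:
  assumes "R \<ge> 0" "\<And>t. t \<in> {-R..R} \<Longrightarrow> \<bar>f t\<bar> \<le> B"
  shows "\<bar>Ee R f u\<bar> \<le> B"
proof -
  have B: "0 \<le> B" using assms(2)[of 0] assms(1) by auto
  have f1: "\<bar>f (clampT R (u - (R+1)))\<bar> \<le> B" and f2: "\<bar>f (clampT R (u + (R+1)))\<bar> \<le> B"
    using assms clampT_in by auto
  show ?thesis
  proof (cases "u \<ge> 0")
    case True
    then have "Ee R f u = max 0 (min 1 u) * f (clampT R (u - (R+1)))" unfolding Ee_def by simp
    also have "\<bar>\<dots>\<bar> \<le> 1 * B" unfolding abs_mult
      by (rule mult_mono) (use f1 in auto)
    finally show ?thesis by simp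
  next
    case False
    then have "Ee R f u = - (max 0 (min 1 (-u)) * f (clampT R (u + (R+1))))" unfolding Ee_def by simp
    also have "\<bar>\<dots>\<bar> \<le> 1 * B" unfolding abs_minus_cancel abs_mult
      by (rule mult_mono) (use f2 in auto)
    finally show ?thesis by simp
  qed
qed

lemma Ee_plus: "t \<in> {-R..R} \<Longrightarrow> R \<ge> 0 \<Longrightarrow> Ee R f (t + (R+1)) = f t"
  unfolding Ee_def by (simp add: clampT_id)

lemma Ee_minus: "t \<in> {-R..R} \<Longrightarrow> R \<ge> 0 \<Longrightarrow> Ee R f (t - (R+1)) = - f t"
  unfolding Ee_def by (simp add: clampT_id)

lemma cont_bound:
  fixes f :: "real \<Rightarrow> real"
  assumes "continuous_on UNIV f"
  shows "\<exists>B\<ge>0. \<forall>t\<in>{-R..R}. \<bar>f t\<bar> \<le> B"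
proof -
  have "compact (f ` {-R..R})"
    by (rule compact_continuous_image) (use assms continuous_on_subset in auto)
  then obtain B where "\<forall>y\<in>f ` {-R..R}. norm y \<le> B"
    using compact_imp_bounded bounded_iff by blast
  then show ?thesis by (intro exI[of _ "max 0 B"]) auto
qed

definition Lp :: "real \<Rightarrow> real pmf \<Rightarrow> (real \<Rightarrow> real) \<Rightarrow> real" where
  "Lp R p f = measure_pmf.expectation p (Ee R f)"

lemma Lp_sum: "finite (set_pmf p) \<Longrightarrow> Lp R p f = (\<Sum>u\<in>set_pmf p. pmf p u * Ee R f u)"
  unfolding Lp_def by (subst integral_measure_pmf[of "set_pmf p"]) auto

lemma Lp_bound:
  assumes "finite (set_pmf p)" "R \<ge> 0" "\<And>t. t \<in> {-R..R} \<Longrightarrow> \<bar>f t\<bar> \<le> B"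
  shows "\<bar>Lp R p f\<bar> \<le> B"
proof -
  have "\<bar>Lp R p f\<bar> \<le> (\<Sum>u\<in>set_pmf p. \<bar>pmf p u * Ee R f u\<bar>)"
    unfolding Lp_sum[OF assms(1)] by (rule sum_abs)
  also have "\<dots> \<le> (\<Sum>u\<in>set_pmf p. pmf p u * B)"
    by (intro sum_mono) (auto simp: abs_mult intro!: mult_left_mono Ee_bound assms)
  also have "\<dots> = B" using sum_pmf_eq_1[OF assms(1), of p] by (simp add: sum_distrib_right[symmetric])
  finally show ?thesis .
qed

definition mixp :: "real \<Rightarrow> real \<Rightarrow> real pmf \<Rightarrow> real pmf" where
  "mixp s u p = bind_pmf (bernoulli_pmf s) (\<lambda>b. if b then return_pmf u else p)"

lemma mixp_set: "set_pmf (mixp s u p) \<subseteq> insert u (set_pmf p)"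
  unfolding mixp_def by (auto split: if_splits)

lemma Lp_mixp:
  assumes "finite (set_pmf p)" "0 \<le> s" "s \<le> 1"
  shows "Lp R (mixp s u p) f = s * Ee R f u + (1 - s) * Lp R p f"
  unfolding Lp_def mixp_def
  apply (subst pmf_expectation_bind[of UNIV])
  using assms by (auto simp: UNIV_bool)

definition Mset :: "real \<Rightarrow> real pmf set" where
  "Mset R = {p. finite (set_pmf p) \<and> set_pmf p \<subseteq> {-(2*R+2)<..2*R+2}}"

definition FF :: "real \<Rightarrow> (nat \<Rightarrow> real \<Rightarrow> real) \<Rightarrow> nat \<Rightarrow> real \<Rightarrow> (real \<Rightarrow> real) \<Rightarrow> real pmf \<Rightarrow> real" where
  "FF R \<phi> N \<delta> h p = (\<Sum>i<N. (Lp R p (\<phi> i))\<^sup>2) + (max 0 (\<delta> - Lp R p h))\<^sup>2"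

lemma maxsq_bound: "(max 0 (c - d))\<^sup>2 \<le> (max 0 c)\<^sup>2 - 2 * (max 0 c) * d + d\<^sup>2" for c d :: real
proof (cases "c \<le> 0")
  case True
  show ?thesis
  proof (cases "c - d \<le> 0")
    case True
    then show ?thesis using \<open>c \<le> 0\<close> by simp
  next
    case False
    then have "(max 0 (c - d))\<^sup>2 = (c - d)\<^sup>2" by simp
    also have "\<dots> \<le> (-d)\<^sup>2" using \<open>c \<le> 0\<close> False by (intro power_mono) auto
    finally show ?thesis using \<open>c \<le> 0\<close> by simp
  qed
next
  case False
  then have "(max 0 c)\<^sup>2 - 2 * (max 0 c) * d + d\<^sup>2 = (c - d)\<^sup>2" by (simp add: power2_diff)
  moreover have "(max 0 (c - d))\<^sup>2 \<le> (c - d)\<^sup>2"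
    by (cases "c - d \<le> 0") auto
  ultimately show ?thesis by simp
qed

lemma key_ineq:
  fixes a v :: "nat \<Rightarrow> real"
  shows "(\<Sum>i<N. (a i + s * v i)\<^sup>2) + (max 0 (\<delta> - (y + s * w)))\<^sup>2
     \<le> (\<Sum>i<N. (a i)\<^sup>2) + (max 0 (\<delta> - y))\<^sup>2
        + 2 * s * ((\<Sum>i<N. a i * v i) - max 0 (\<delta> - y) * w) + s\<^sup>2 * ((\<Sum>i<N. (v i)\<^sup>2) + w\<^sup>2)"
proof -
  have e: "\<And>i. (a i + s * v i)\<^sup>2 = (a i)\<^sup>2 + 2 * s * (a i * v i) + s\<^sup>2 * (v i)\<^sup>2"
    by (simp add: power2_eq_square algebra_simps)
  have 1: "(\<Sum>i<N. (a i + s * v i)\<^sup>2) = (\<Sum>i<N. (a i)\<^sup>2) + 2 * s * (\<Sum>i<N. a i * v i) + s\<^sup>2 * (\<Sum>i<N. (v i)\<^sup>2)"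
    unfolding e sum.distrib sum_distrib_left[symmetric] ..
  have 2: "(max 0 (\<delta> - (y + s * w)))\<^sup>2 \<le> (max 0 (\<delta> - y))\<^sup>2 - 2 * (max 0 (\<delta> - y)) * (s * w) + (s * w)\<^sup>2"
    using maxsq_bound[of "\<delta> - y" "s * w"] by (simp add: algebra_simps)
  show ?thesis using 1 2 by (simp add: power_mult_distrib algebra_simps)
qed

lemma varB:
  fixes \<phi> :: "nat \<Rightarrow> real \<Rightarrow> real" and h :: "real \<Rightarrow> real"
  assumes R: "R > 0" and phic: "\<And>i. continuous_on UNIV (\<phi> i)" and hc: "continuous_on UNIV h"
    and eta: "\<eta> > 0" "\<And>p. p \<in> Mset R \<Longrightarrow> FF R \<phi> N \<delta> h p \<ge> \<eta>"
  shows "\<exists>c. \<forall>t\<in>{-R..R}. \<bar>h t - (\<Sum>i<N. c i * \<phi> i t)\<bar> < \<delta>"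
proof -
  have "\<forall>i. \<exists>B\<ge>0. \<forall>t\<in>{-R..R}. \<bar>\<phi> i t\<bar> \<le> B" using cont_bound[OF phic] by blast
  then obtain B where B: "\<And>i. B i \<ge> 0" "\<And>i t. t \<in> {-R..R} \<Longrightarrow> \<bar>\<phi> i t\<bar> \<le> B i" by metis
  obtain Bh where Bh: "Bh \<ge> 0" "\<And>t. t \<in> {-R..R} \<Longrightarrow> \<bar>h t\<bar> \<le> Bh"
    using cont_bound[OF hc] by blast
  define C where "C = (\<Sum>i<N. (2 * B i)\<^sup>2) + (2 * Bh)\<^sup>2"
  have C0: "C \<ge> 0" unfolding C_def by (intro add_nonneg_nonneg sum_nonneg) auto
  define S where "S = FF R \<phi> N \<delta> h ` Mset R"
  have p0: "return_pmf 0 \<in> Mset R" unfolding Mset_def using R by auto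
  have Sne: "S \<noteq> {}" unfolding S_def using p0 by blast
  have Sbdd: "bdd_below S" unfolding S_def bdd_below_def using eta(2) by blast
  define m where "m = Inf S"
  have mge: "m \<ge> \<eta>" unfolding m_def S_def using Sne eta(2) by (auto intro!: cInf_greatest simp: S_def)
  have m0: "m > 0" using mge eta by simp
  have mle: "m \<le> FF R \<phi> N \<delta> h q" if "q \<in> Mset R" for q
    unfolding m_def S_def using Sbdd that by (auto intro!: cInf_lower simp: S_def)
  define s where "s = min 1 (m / (2 * C + 1))"
  have s0: "s > 0" unfolding s_def using m0 C0 by simp
  have s1: "s \<le> 1" unfolding s_def by simp
  have sC: "2 * s * C \<le> m"
  proof -
    have "s \<le> m / (2 * C + 1)" unfolding s_def by simp
    then have "s * (2 * C + 1) \<le> m" using C0 by (simp add: field_simps)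
    then show ?thesis using s0 by (simp add: algebra_simps)
  qed
  define \<eta>' where "\<eta>' = s * m / 2"
  have "\<eta>' > 0" unfolding \<eta>'_def using s0 m0 by simp
  then have "Inf S < m + \<eta>'" unfolding m_def by simp
  then obtain p where p: "p \<in> Mset R" "FF R \<phi> N \<delta> h p < m + \<eta>'"
    using cInf_less_iff[OF Sne Sbdd] unfolding S_def by auto
  have pfin: "finite (set_pmf p)" using p(1) unfolding Mset_def by auto
  define a where "a i = Lp R p (\<phi> i)" for i
  define y where "y = Lp R p h"
  define b where "b = max 0 (\<delta> - y)"
  define G where "G t = (\<Sum>i<N. a i * \<phi> i t) - b * h t" for t
  define \<gamma> where "\<gamma> = FF R \<phi> N \<delta> h p - b * \<delta>"
  have FFp: "FF R \<phi> N \<delta> h p = (\<Sum>i<N. (a i)\<^sup>2) + b\<^sup>2" unfolding FF_def a_def b_def y_def by simp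
  have by_eq: "b * y = b * \<delta> - b\<^sup>2"
    unfolding b_def by (cases "\<delta> - y \<le> 0") (simp_all add: max_def power2_eq_square algebra_simps)
  have gam: "(\<Sum>i<N. (a i)\<^sup>2) - b * y = \<gamma>"
    unfolding \<gamma>_def FFp by_eq by simp
  have abound: "\<bar>a i\<bar> \<le> B i" for i unfolding a_def using Lp_bound[OF pfin] R B by auto
  have ybound: "\<bar>y\<bar> \<le> Bh" unfolding y_def using Lp_bound[OF pfin] R Bh by auto
  have main: "z * G t > \<gamma> - m / 2" if t: "t \<in> {-R..R}" and z: "z = 1 \<or> z = -1" for t z
  proof -
    define u where "u = t + z * (R + 1)"
    have Eu: "Ee R f u = z * f t" for f
    proof (cases "z = 1")
      case True
      then show ?thesis using Ee_plus[OF t] R unfolding u_def by simp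
    next
      case False
      then have "z = -1" "u = t - (R+1)" using z unfolding u_def by auto
      then show ?thesis using Ee_minus[OF t] R by simp
    qed
    have uin: "u \<in> {-(2*R+2)<..2*R+2}" using t z R unfolding u_def by auto
    define q where "q = mixp s u p"
    have q: "q \<in> Mset R" using p(1) mixp_set[of s u p] uin unfolding Mset_def q_def
      by (auto dest: finite_subset)
    define v where "v i = z * \<phi> i t - a i" for i
    define w where "w = z * h t - y"
    have Lq: "Lp R q f = Lp R p f + s * (z * f t - Lp R p f)" for f
      unfolding q_def using Lp_mixp[OF pfin, of s R u f] s0 s1 Eu by (simp add: algebra_simps)
    have FFq: "FF R \<phi> N \<delta> h q = (\<Sum>i<N. (a i + s * v i)\<^sup>2) + (max 0 (\<delta> - (y + s * w)))\<^sup>2"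
      unfolding FF_def Lq a_def v_def y_def w_def by simp
    have vb: "(v i)\<^sup>2 \<le> (2 * B i)\<^sup>2" for i
    proof -
      have "\<bar>z * \<phi> i t\<bar> \<le> B i" using z B(2)[OF t, of i] by auto
      then have "\<bar>v i\<bar> \<le> 2 * B i" unfolding v_def using abound[of i] by linarith
      then have "\<bar>v i\<bar>\<^sup>2 \<le> (2 * B i)\<^sup>2" by (intro power_mono) auto
      then show ?thesis by simp
    qed
    have wb: "w\<^sup>2 \<le> (2 * Bh)\<^sup>2"
    proof -
      have "\<bar>z * h t\<bar> \<le> Bh" using z Bh(2)[OF t] by auto
      then have "\<bar>w\<bar> \<le> 2 * Bh" unfolding w_def using ybound by linarith
      then have "\<bar>w\<bar>\<^sup>2 \<le> (2 * Bh)\<^sup>2" by (intro power_mono) auto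
      then show ?thesis by simp
    qed
    have VC: "(\<Sum>i<N. (v i)\<^sup>2) + w\<^sup>2 \<le> C" unfolding C_def
      by (intro add_mono sum_mono vb wb)
    have s1: "(\<Sum>i<N. a i * v i) = z * (\<Sum>i<N. a i * \<phi> i t) - (\<Sum>i<N. (a i)\<^sup>2)"
    proof -
      have "\<And>i. a i * v i = z * (a i * \<phi> i t) - (a i)\<^sup>2"
        unfolding v_def by (simp add: power2_eq_square algebra_simps)
      then show ?thesis by (simp add: sum_subtractf sum_distrib_left)
    qed
    have lin: "(\<Sum>i<N. a i * v i) - b * w = z * G t - \<gamma>"
      unfolding G_def gam[symmetric] w_def s1 by (simp add: algebra_simps)
    have "m \<le> FF R \<phi> N \<delta> h q" using mle[OF q] .
    also have "\<dots> \<le> FF R \<phi> N \<delta> h p + 2 * s * (z * G t - \<gamma>) + s\<^sup>2 * ((\<Sum>i<N. (v i)\<^sup>2) + w\<^sup>2)"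
    proof -
      have k: "FF R \<phi> N \<delta> h q \<le> (\<Sum>i<N. (a i)\<^sup>2) + b\<^sup>2 + 2 * s * ((\<Sum>i<N. a i * v i) - b * w) + s\<^sup>2 * ((\<Sum>i<N. (v i)\<^sup>2) + w\<^sup>2)"
        using key_ineq[where N=N and a=a and s=s and v=v and \<delta>=\<delta> and y=y and w=w] unfolding FFq b_def .
      show ?thesis using k unfolding lin FFp[symmetric] .
    qed
    also have "\<dots> \<le> FF R \<phi> N \<delta> h p + 2 * s * (z * G t - \<gamma>) + s\<^sup>2 * C"
      using VC by (simp add: mult_left_mono)
    finally have "m < m + \<eta>' + 2 * s * (z * G t - \<gamma>) + s\<^sup>2 * C" using p(2) by linarith
    then have "0 < s * m / 2 + 2 * s * (z * G t - \<gamma>) + s * (s * C)"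
      unfolding \<eta>'_def by (simp add: power2_eq_square algebra_simps)
    then have "0 < s * (m / 2 + 2 * (z * G t - \<gamma>) + s * C)" by (simp add: algebra_simps)
    then have "0 < m / 2 + 2 * (z * G t - \<gamma>) + s * C" using s0 by (simp add: zero_less_mult_iff)
    moreover have "s * C \<le> m / 2" using sC by (simp add: algebra_simps)
    ultimately show ?thesis by (smt (verit))
  qed
  have gm: "\<gamma> \<ge> m - b * \<delta>" unfolding \<gamma>_def using mle[OF p(1)] by simp
  have Gb: "\<bar>G t\<bar> < b * \<delta> - m / 2" if "t \<in> {-R..R}" for t
    using main[OF that, of 1] main[OF that, of "-1"] gm by auto
  have "0 \<in> {-R..R}" using R by simp
  from Gb[OF this] have bpos: "b > 0" using m0 b_def
    by (cases "b = 0") auto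
  define c where "c i = a i / b" for i
  have "\<bar>h t - (\<Sum>i<N. c i * \<phi> i t)\<bar> < \<delta>" if t: "t \<in> {-R..R}" for t
  proof -
    have e: "(\<Sum>i<N. c i * \<phi> i t) = (\<Sum>i<N. a i * \<phi> i t) / b"
      unfolding c_def by (simp add: sum_divide_distrib)
    have "h t - (\<Sum>i<N. c i * \<phi> i t) = - G t / b"
      unfolding e G_def using bpos by (simp add: field_simps)
    then have "\<bar>h t - (\<Sum>i<N. c i * \<phi> i t)\<bar> = \<bar>G t\<bar> / b" using bpos by simp
    also have "\<dots> < (b * \<delta> - m / 2) / b" using Gb[OF t] bpos by (simp add: divide_strict_right_mono)
    also have "\<dots> \<le> \<delta>" using bpos m0 by (simp add: field_simps)
    finally show ?thesis .
  qed
  then show ?thesis by blast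
qed

lemma Ee_meas: "continuous_on UNIV f \<Longrightarrow> Ee R f \<in> borel_measurable borel"
  by (rule borel_measurable_continuous_onI[OF Ee_cont])

lemma FF_phi: "i < N \<Longrightarrow> (Lp R p (\<phi> i))\<^sup>2 \<le> FF R \<phi> N \<delta> h p"
proof -
  assume "i < N"
  then have "(Lp R p (\<phi> i))\<^sup>2 \<le> (\<Sum>i<N. (Lp R p (\<phi> i))\<^sup>2)"
    by (intro member_le_sum) auto
  then show ?thesis unfolding FF_def using zero_le_power2[of "max 0 (\<delta> - Lp R p h)"] by linarith
qed

lemma FF_h: "(max 0 (\<delta> - Lp R p h))\<^sup>2 \<le> FF R \<phi> N \<delta> h p"
proof -
  have "0 \<le> (\<Sum>i<N. (Lp R p (\<phi> i))\<^sup>2)" by (intro sum_nonneg) auto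
  then show ?thesis unfolding FF_def by simp
qed

lemma limA:
  fixes \<phi> :: "nat \<Rightarrow> real \<Rightarrow> real" and h :: "real \<Rightarrow> real"
  assumes R: "R > 0" and phic: "\<And>i. continuous_on UNIV (\<phi> i)" and hc: "continuous_on UNIV h"
    and hyp: "\<And>N \<eta>. \<eta> > 0 \<Longrightarrow> \<exists>p\<in>Mset R. FF R \<phi> N \<delta> h p < \<eta>"
  shows "\<exists>\<rho>. real_distribution \<rho> \<and> (\<forall>i. (\<integral>u. Ee R (\<phi> i) u \<partial>\<rho>) = 0) \<and> (\<integral>u. Ee R h u \<partial>\<rho>) \<ge> \<delta>"
proof -
  have "\<forall>n. \<exists>p\<in>Mset R. FF R \<phi> n \<delta> h p < 1 / (real n + 1)"
    using hyp by simp
  then obtain P where P: "\<And>n. P n \<in> Mset R" "\<And>n. FF R \<phi> n \<delta> h (P n) < 1 / (real n + 1)"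
    by metis
  define \<mu> where "\<mu> n = distr (measure_pmf (P n)) borel id" for n
  have rd: "real_distribution (\<mu> n)" for n
    unfolding \<mu>_def by (intro prob_space.real_distribution_distr[OF prob_space_measure_pmf]) simp
  have int_mu: "(\<integral>u. Ee R f u \<partial>\<mu> n) = Lp R (P n) f" if "continuous_on UNIV f" for f n
    unfolding \<mu>_def Lp_def by (subst integral_distr) (auto intro: Ee_meas[OF that])
  have tight: "tight \<mu>"
    unfolding tight_def
  proof (intro conjI allI impI)
    fix n show "real_distribution (\<mu> n)" by (rule rd)
  next
    fix \<epsilon> :: real assume "\<epsilon> > 0"
    show "\<exists>a b. a < b \<and> (\<forall>n. 1 - \<epsilon> < measure (\<mu> n) {a<..b})"
    proof (intro exI conjI allI)
      show "-(2*R+2) < 2*R+2" using R by simp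
    next
      fix n
      have "measure (\<mu> n) {-(2*R+2)<..2*R+2} = measure (measure_pmf (P n)) {-(2*R+2)<..2*R+2}"
        unfolding \<mu>_def by (subst measure_distr) auto
      also have "\<dots> = 1" unfolding measure_pmf_conv_infsetsum
        by (rule infsetsum_pmf_eq_1) (use P(1)[of n] in \<open>auto simp: Mset_def\<close>)
      finally show "1 - \<epsilon> < measure (\<mu> n) {-(2*R+2)<..2*R+2}" using \<open>\<epsilon> > 0\<close> by simp
    qed
  qed
  obtain r \<rho> where r: "strict_mono r" "real_distribution \<rho>" "weak_conv_m (\<mu> \<circ> id \<circ> r) \<rho>"
    using tight_imp_convergent_subsubsequence[OF tight, of id] by (auto simp: strict_mono_def)
  have conv: "(\<lambda>n. Lp R (P (r n)) f) \<longlonglongrightarrow> (\<integral>u. Ee R f u \<partial>\<rho>)" if fc: "continuous_on UNIV f" for f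
  proof -
    obtain B where B: "B \<ge> 0" "\<And>t. t \<in> {-R..R} \<Longrightarrow> \<bar>f t\<bar> \<le> B" using cont_bound[OF fc] by blast
    have "(\<lambda>n. \<integral>u. Ee R f u \<partial>((\<mu> \<circ> id \<circ> r) n)) \<longlonglongrightarrow> (\<integral>u. Ee R f u \<partial>\<rho>)"
      apply (rule weak_conv_imp_integral_bdd_continuous_conv[where B=B])
      using rd r(2) r(3) Ee_isCont[OF fc] Ee_bound[OF less_imp_le[OF R] B(2)] by (auto simp: comp_def)
    then show ?thesis using int_mu[OF fc] by simp
  qed
  have lim0: "(\<lambda>n. 1 / (real n + 1)) \<longlonglongrightarrow> (0::real)"
    using LIMSEQ_inverse_real_of_nat by (simp add: inverse_eq_divide add.commute)
  have rbound: "1 / (real (r n) + 1) \<le> 1 / (real n + 1)" for n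
    using seq_suble[OF r(1), of n] by (simp add: divide_left_mono)
  have phi0: "(\<integral>u. Ee R (\<phi> i) u \<partial>\<rho>) = 0" for i
  proof -
    let ?L = "\<integral>u. Ee R (\<phi> i) u \<partial>\<rho>"
    have c2: "(\<lambda>n. (Lp R (P (r n)) (\<phi> i))\<^sup>2) \<longlonglongrightarrow> ?L\<^sup>2"
      by (intro tendsto_intros conv phic)
    have "?L\<^sup>2 \<le> 0"
    proof (rule LIMSEQ_le[OF c2 lim0])
      show "\<exists>N. \<forall>n\<ge>N. (Lp R (P (r n)) (\<phi> i))\<^sup>2 \<le> 1 / (real n + 1)"
      proof (intro exI allI impI)
        fix n assume "n \<ge> Suc i"
        then have "i < r n" using seq_suble[OF r(1), of n] by simp
        then have "(Lp R (P (r n)) (\<phi> i))\<^sup>2 \<le> FF R \<phi> (r n) \<delta> h (P (r n))" by (rule FF_phi)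
        also have "\<dots> < 1 / (real (r n) + 1)" by (rule P(2))
        also have "\<dots> \<le> 1 / (real n + 1)" by (rule rbound)
        finally show "(Lp R (P (r n)) (\<phi> i))\<^sup>2 \<le> 1 / (real n + 1)" by simp
      qed
    qed
    then show ?thesis by simp
  qed
  have hge: "(\<integral>u. Ee R h u \<partial>\<rho>) \<ge> \<delta>"
  proof -
    let ?L = "\<integral>u. Ee R h u \<partial>\<rho>"
    have c2: "(\<lambda>n. (max 0 (\<delta> - Lp R (P (r n)) h))\<^sup>2) \<longlonglongrightarrow> (max 0 (\<delta> - ?L))\<^sup>2"
      by (intro tendsto_intros conv hc)
    have "(max 0 (\<delta> - ?L))\<^sup>2 \<le> 0"
    proof (rule LIMSEQ_le[OF c2 lim0])
      show "\<exists>N. \<forall>n\<ge>N. (max 0 (\<delta> - Lp R (P (r n)) h))\<^sup>2 \<le> 1 / (real n + 1)"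
      proof (intro exI allI impI)
        fix n :: nat assume "n \<ge> 0"
        have "(max 0 (\<delta> - Lp R (P (r n)) h))\<^sup>2 \<le> FF R \<phi> (r n) \<delta> h (P (r n))" by (rule FF_h)
        also have "\<dots> < 1 / (real (r n) + 1)" by (rule P(2))
        also have "\<dots> \<le> 1 / (real n + 1)" by (rule rbound)
        finally show "(max 0 (\<delta> - Lp R (P (r n)) h))\<^sup>2 \<le> 1 / (real n + 1)" by simp
      qed
    qed
    then have "max 0 (\<delta> - ?L) = 0" by simp
    then show ?thesis by simp
  qed
  show ?thesis using r(2) phi0 hge by blast
qed

lemma rfb:
  fixes N :: "'a measure" and g :: "'a \<Rightarrow> real ^ 'n" and X :: "(real ^ 'n) set"
  assumes fin: "finite_measure N" and gm: "g \<in> measurable N borel"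
    and gX: "\<And>x. x \<in> space N \<Longrightarrow> g x \<in> X" and Xc: "closed X"
  shows "regular_finite_borel X (distr N (restrict_space borel X) g)"
proof -
  define M1 where "M1 = distr N (restrict_space borel X) g"
  define M' where "M' = distr N borel g"
  have gm': "g \<in> measurable N (restrict_space borel X)"
    using gm gX by (intro measurable_restrict_space2) auto
  have XB: "X \<in> sets borel" using Xc by auto
  have setsM1: "sets M1 = sets (restrict_space borel X)" unfolding M1_def by simp
  have finM1: "finite_measure M1" unfolding M1_def by (rule finite_measure.finite_measure_distr[OF fin gm'])
  have finM': "finite_measure M'" unfolding M'_def by (rule finite_measure.finite_measure_distr[OF fin gm])
  have setsM': "sets M' = sets borel" unfolding M'_def by simp
  have spfin: "emeasure M' (space M') \<noteq> \<infinity>" using finite_measure.emeasure_finite[OF finM'] by simp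
  have inS: "A \<in> sets M1 \<longleftrightarrow> A \<subseteq> X \<and> A \<in> sets borel" for A
    unfolding setsM1 using XB by (subst sets_restrict_space_iff) auto
  have eq: "emeasure M1 A = emeasure M' A" if "A \<in> sets M1" for A
  proof -
    have "A \<in> sets borel" using that inS by auto
    moreover have "A \<in> sets (restrict_space borel X)" using that setsM1 by simp
    ultimately show ?thesis unfolding M1_def M'_def
      by (simp add: emeasure_distr[OF gm'] emeasure_distr[OF gm])
  qed
  show ?thesis
    unfolding regular_finite_borel_def M1_def[symmetric]
  proof (intro conjI ballI)
    show "sets M1 = sets (restrict_space borel X)" by (rule setsM1)
    show "finite_measure M1" by (rule finM1)
  next
    fix A assume A: "A \<in> sets M1"
    then have AX: "A \<subseteq> X" and AB: "A \<in> sets borel" using inS by auto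
    have "emeasure M1 A = emeasure M' A" using eq[OF A] .
    also have "\<dots> = (SUP K \<in> {K. K \<subseteq> A \<and> compact K}. emeasure M' K)"
      by (rule inner_regular[OF setsM' spfin AB])
    also have "\<dots> = (SUP K \<in> {K. compact K \<and> K \<subseteq> A}. emeasure M1 K)"
    proof (rule SUP_cong)
      show "{K. K \<subseteq> A \<and> compact K} = {K. compact K \<and> K \<subseteq> A}" by auto
    next
      fix K assume "K \<in> {K. compact K \<and> K \<subseteq> A}"
      then have "K \<in> sets M1" using inS AX by (auto intro: borel_closed compact_imp_closed)
      then show "emeasure M' K = emeasure M1 K" using eq by simp
    qed
    finally show "emeasure M1 A = (SUP K \<in> {K. compact K \<and> K \<subseteq> A}. emeasure M1 K)" .
    show "emeasure M1 A = (INF U \<in> {U. openin (top_of_set X) U \<and> A \<subseteq> U}. emeasure M1 U)"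
    proof (rule antisym)
      show "emeasure M1 A \<le> (INF U \<in> {U. openin (top_of_set X) U \<and> A \<subseteq> U}. emeasure M1 U)"
      proof (rule INF_greatest)
        fix U assume U: "U \<in> {U. openin (top_of_set X) U \<and> A \<subseteq> U}"
        then obtain V where V: "open V" "U = X \<inter> V" by (auto simp: openin_open)
        then have "U \<in> sets M1" using inS XB by auto
        then show "emeasure M1 A \<le> emeasure M1 U" using U by (intro emeasure_mono) auto
      qed
    next
      have "(INF U \<in> {U. openin (top_of_set X) U \<and> A \<subseteq> U}. emeasure M1 U)
            \<le> (INF U \<in> {U. A \<subseteq> U \<and> open U}. emeasure M' U)"
      proof (rule INF_greatest)
        fix U assume U: "U \<in> {U. A \<subseteq> U \<and> open U}"
        have XU: "X \<inter> U \<in> {U. openin (top_of_set X) U \<and> A \<subseteq> U}"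
          using U AX by (auto simp: openin_open)
        have "X \<inter> U \<in> sets M1" using inS XB U by auto
        then have "emeasure M1 (X \<inter> U) = emeasure M' (X \<inter> U)" using eq by simp
        also have "\<dots> \<le> emeasure M' U" using U setsM' by (intro emeasure_mono) auto
        finally show "(INF U \<in> {U. openin (top_of_set X) U \<and> A \<subseteq> U}. emeasure M1 U) \<le> emeasure M' U"
          by (rule INF_lower2[OF XU])
      qed
      also have "\<dots> = emeasure M' A"
        by (rule outer_regular[OF setsM' spfin AB, symmetric])
      also have "\<dots> = emeasure M1 A" using eq[OF A] by simp
      finally show "(INF U \<in> {U. openin (top_of_set X) U \<and> A \<subseteq> U}. emeasure M1 U) \<le> emeasure M1 A" .
    qed
  qed
qed

lemma density_finite:
  assumes rho: "real_distribution \<rho>" and wm: "w \<in> borel_measurable borel"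
    and w: "\<And>u. 0 \<le> w u" "\<And>u. w u \<le> 1"
  shows "finite_measure (density \<rho> (\<lambda>u. ennreal (w u)))"
proof -
  interpret real_distribution \<rho> by (rule rho)
  have wm': "(\<lambda>u. ennreal (w u)) \<in> borel_measurable \<rho>" using wm by simp
  have "emeasure (density \<rho> (\<lambda>u. ennreal (w u))) (space \<rho>) = (\<integral>\<^sup>+ x. ennreal (w x) * indicator (space \<rho>) x \<partial>\<rho>)"
    by (rule emeasure_density[OF wm']) simp
  also have "\<dots> \<le> (\<integral>\<^sup>+ x. 1 \<partial>\<rho>)"
    by (intro nn_integral_mono) (auto simp: indicator_def w)
  also have "\<dots> = 1"
  proof -
    have sp: "space \<rho> = UNIV" using sets_eq_imp_space_eq[OF events_eq_borel] by simp
    show ?thesis using emeasure_space_1 sp by simp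
  qed
  finally show ?thesis
    by (intro finite_measureI) (auto simp: top_unique)
qed

lemma int_transfer:
  fixes F :: "real ^ 'n \<Rightarrow> real" and g :: "real \<Rightarrow> real ^ 'n" and w :: "real \<Rightarrow> real"
  assumes rho: "real_distribution \<rho>" and Fc: "continuous_on UNIV F"
    and gc: "continuous_on UNIV g" and gX: "\<And>u. g u \<in> X" and Xc: "compact X"
    and wc: "continuous_on UNIV w" and w: "\<And>u. 0 \<le> w u" "\<And>u. w u \<le> 1"
  shows "(\<integral>x. F x \<partial>(distr (density \<rho> (\<lambda>u. ennreal (w u))) (restrict_space borel X) g))
        = (\<integral>u. w u * F (g u) \<partial>\<rho>)"
proof -
  interpret real_distribution \<rho> by (rule rho)
  have wm: "w \<in> borel_measurable borel" using borel_measurable_continuous_onI[OF wc] .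
  have gm: "g \<in> borel_measurable borel" using borel_measurable_continuous_onI[OF gc] .
  have gm': "g \<in> measurable (density \<rho> (\<lambda>u. ennreal (w u))) (restrict_space borel X)"
    using gm gX by (intro measurable_restrict_space2) auto
  have Fm: "F \<in> borel_measurable (restrict_space borel X)"
    using borel_measurable_continuous_onI[OF Fc] by (rule measurable_restrict_space1)
  have "(\<integral>x. F x \<partial>(distr (density \<rho> (\<lambda>u. ennreal (w u))) (restrict_space borel X) g))
      = (\<integral>u. F (g u) \<partial>(density \<rho> (\<lambda>u. ennreal (w u))))"
    by (rule integral_distr[OF gm' Fm])
  also have "\<dots> = (\<integral>u. w u *\<^sub>R F (g u) \<partial>\<rho>)"
    apply (rule integral_density)
    using borel_measurable_continuous_onI[OF continuous_on_compose2[OF Fc gc]] wm w by auto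
  finally show ?thesis by simp
qed

lemma contraC:
  fixes \<sigma> h :: "real \<Rightarrow> real"
  assumes sc: "continuous_on UNIV \<sigma>" and disc: "discriminatory \<sigma> TYPE('n::finite)"
    and R: "R > 0" and hc: "continuous_on UNIV h" and \<delta>: "\<delta> > 0"
    and rho: "real_distribution \<rho>"
    and z: "\<And>m k. m \<in> \<int> \<Longrightarrow> k \<in> \<int> \<Longrightarrow> (\<integral>u. Ee R (\<lambda>t. \<sigma> (m * t + k)) u \<partial>\<rho>) = 0"
    and hh: "(\<integral>u. Ee R h u \<partial>\<rho>) \<ge> \<delta>"
  shows False
proof -
  interpret real_distribution \<rho> by (rule rho)
  define i0 :: 'n where "i0 = undefined"
  define v :: "real ^ 'n" where "v = axis i0 1"
  define X where "X = (\<lambda>t. t *\<^sub>R v) ` {-R..R}"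
  have Xc: "compact X" unfolding X_def
    by (intro compact_continuous_image continuous_intros) auto
  have Xne: "X \<noteq> {}" unfolding X_def using R by auto
  define wp where "wp u = max 0 (min 1 u)" for u :: real
  define wm where "wm u = max 0 (min 1 (-u))" for u :: real
  define gp where "gp u = clampT R (u - (R+1)) *\<^sub>R v" for u
  define gm where "gm u = clampT R (u + (R+1)) *\<^sub>R v" for u
  have wpc: "continuous_on UNIV wp" unfolding wp_def by (intro continuous_intros)
  have wmc: "continuous_on UNIV wm" unfolding wm_def by (intro continuous_intros)
  have gpc: "continuous_on UNIV gp" unfolding gp_def by (intro continuous_intros)
  have gmc: "continuous_on UNIV gm" unfolding gm_def by (intro continuous_intros)
  have gpX: "gp u \<in> X" for u unfolding gp_def X_def using clampT_in[of R] R by auto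
  have gmX: "gm u \<in> X" for u unfolding gm_def X_def using clampT_in[of R] R by auto
  have w01: "0 \<le> wp u" "wp u \<le> 1" "0 \<le> wm u" "wm u \<le> 1" for u unfolding wp_def wm_def by auto
  define M1 where "M1 = distr (density \<rho> (\<lambda>u. ennreal (wp u))) (restrict_space borel X) gp"
  define M2 where "M2 = distr (density \<rho> (\<lambda>u. ennreal (wm u))) (restrict_space borel X) gm"
  have finp: "finite_measure (density \<rho> (\<lambda>u. ennreal (wp u)))"
    using density_finite[OF rho borel_measurable_continuous_onI[OF wpc]] w01 by auto
  have finm: "finite_measure (density \<rho> (\<lambda>u. ennreal (wm u)))"
    using density_finite[OF rho borel_measurable_continuous_onI[OF wmc]] w01 by auto
  have Xcl: "closed X" using Xc compact_imp_closed by blast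
  have reg1: "regular_finite_borel X M1" unfolding M1_def
    apply (rule rfb[OF finp _ _ Xcl])
    using borel_measurable_continuous_onI[OF gpc] gpX by auto
  have reg2: "regular_finite_borel X M2" unfolding M2_def
    apply (rule rfb[OF finm _ _ Xcl])
    using borel_measurable_continuous_onI[OF gmc] gmX by auto
  have diff: "(\<integral>x. F x \<partial>M1) - (\<integral>x. F x \<partial>M2) = (\<integral>u. Ee R (\<lambda>t. F (t *\<^sub>R v)) u \<partial>\<rho>)"
    if Fc: "continuous_on UNIV F" for F :: "real ^ 'n \<Rightarrow> real"
  proof -
    have i1: "(\<integral>x. F x \<partial>M1) = (\<integral>u. wp u * F (gp u) \<partial>\<rho>)"
      unfolding M1_def by (rule int_transfer[OF rho Fc gpc gpX Xc wpc]) (use w01 in auto)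
    have i2: "(\<integral>x. F x \<partial>M2) = (\<integral>u. wm u * F (gm u) \<partial>\<rho>)"
      unfolding M2_def by (rule int_transfer[OF rho Fc gmc gmX Xc wmc]) (use w01 in auto)
    have "compact (F ` X)" using Xc Fc by (intro compact_continuous_image) (auto intro: continuous_on_subset)
    then obtain B where B: "\<And>x. x \<in> X \<Longrightarrow> \<bar>F x\<bar> \<le> B"
      using compact_imp_bounded bounded_iff by (metis image_eqI real_norm_def)
    have int1: "integrable \<rho> (\<lambda>u. wp u * F (gp u))"
    proof (rule integrable_const_bound[where B=B])
      show "AE x in \<rho>. norm (wp x * F (gp x)) \<le> B"
      proof (rule AE_I2)
        fix x
        have "\<bar>wp x\<bar> * \<bar>F (gp x)\<bar> \<le> 1 * B"
          by (rule mult_mono) (use B[OF gpX] w01 in auto)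
        then show "norm (wp x * F (gp x)) \<le> B" by (simp add: abs_mult)
      qed
      show "(\<lambda>u. wp u * F (gp u)) \<in> borel_measurable \<rho>"
        using borel_measurable_continuous_onI[OF continuous_on_mult[OF wpc continuous_on_compose2[OF Fc gpc]]]
        by simp
    qed
    have int2: "integrable \<rho> (\<lambda>u. wm u * F (gm u))"
    proof (rule integrable_const_bound[where B=B])
      show "AE x in \<rho>. norm (wm x * F (gm x)) \<le> B"
      proof (rule AE_I2)
        fix x
        have "\<bar>wm x\<bar> * \<bar>F (gm x)\<bar> \<le> 1 * B"
          by (rule mult_mono) (use B[OF gmX] w01 in auto)
        then show "norm (wm x * F (gm x)) \<le> B" by (simp add: abs_mult)
      qed
      show "(\<lambda>u. wm u * F (gm u)) \<in> borel_measurable \<rho>"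
        using borel_measurable_continuous_onI[OF continuous_on_mult[OF wmc continuous_on_compose2[OF Fc gmc]]]
        by simp
    qed
    have "(\<integral>x. F x \<partial>M1) - (\<integral>x. F x \<partial>M2) = (\<integral>u. wp u * F (gp u) - wm u * F (gm u) \<partial>\<rho>)"
      unfolding i1 i2 by (rule Bochner_Integration.integral_diff[OF int1 int2, symmetric])
    also have "\<dots> = (\<integral>u. Ee R (\<lambda>t. F (t *\<^sub>R v)) u \<partial>\<rho>)"
      unfolding Ee_def wp_def wm_def gp_def gm_def by simp
    finally show ?thesis .
  qed
  have "\<forall>m \<in> int_vecs. \<forall>k \<in> \<int>.
           (\<integral>x. \<sigma> (m \<bullet> x + k) \<partial>M1) - (\<integral>x. \<sigma> (m \<bullet> x + k) \<partial>M2) = 0"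
  proof (intro ballI)
    fix m :: "real ^ 'n" and k :: real assume m: "m \<in> int_vecs" and k: "k \<in> \<int>"
    have Fc: "continuous_on UNIV (\<lambda>x. \<sigma> (m \<bullet> x + k))"
      by (rule continuous_on_compose2[OF sc]) (auto intro!: continuous_intros)
    have "(\<integral>x. \<sigma> (m \<bullet> x + k) \<partial>M1) - (\<integral>x. \<sigma> (m \<bullet> x + k) \<partial>M2)
        = (\<integral>u. Ee R (\<lambda>t. \<sigma> (m \<bullet> (t *\<^sub>R v) + k)) u \<partial>\<rho>)" by (rule diff[OF Fc])
    also have "(\<lambda>t. \<sigma> (m \<bullet> (t *\<^sub>R v) + k)) = (\<lambda>t. \<sigma> (m $ i0 * t + k))"
      unfolding v_def by (simp add: inner_axis mult.commute)
    also have "(\<integral>u. Ee R (\<lambda>t. \<sigma> (m $ i0 * t + k)) u \<partial>\<rho>) = 0"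
      using m k by (intro z) (auto simp: int_vecs_def)
    finally show "(\<integral>x. \<sigma> (m \<bullet> x + k) \<partial>M1) - (\<integral>x. \<sigma> (m \<bullet> x + k) \<partial>M2) = 0" .
  qed
  then have meq: "\<forall>A \<in> sets M1. measure M1 A - measure M2 A = 0"
    using disc Xne Xc reg1 reg2 unfolding discriminatory_def by blast
  have fin1: "finite_measure M1" and fin2: "finite_measure M2"
    using reg1 reg2 unfolding regular_finite_borel_def by auto
  have sets12: "sets M1 = sets M2"
    using reg1 reg2 unfolding regular_finite_borel_def by auto
  have "M1 = M2"
  proof (rule measure_eqI[OF sets12])
    fix A assume "A \<in> sets M1"
    then show "emeasure M1 A = emeasure M2 A"
      using meq finite_measure.emeasure_eq_measure[OF fin1] finite_measure.emeasure_eq_measure[OF fin2]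
      by simp
  qed
  moreover have "(\<integral>x. h (x $ i0) \<partial>M1) - (\<integral>x. h (x $ i0) \<partial>M2) = (\<integral>u. Ee R h u \<partial>\<rho>)"
  proof -
    have Fc: "continuous_on UNIV (\<lambda>x::real^'n. h (x $ i0))"
      by (rule continuous_on_compose2[OF hc]) (auto intro!: continuous_intros)
    show ?thesis using diff[OF Fc] unfolding v_def by simp
  qed
  ultimately show False using hh \<delta> by simp
qed

lemma oneD:
  fixes \<sigma> h :: "real \<Rightarrow> real"
  assumes sc: "continuous_on UNIV \<sigma>" and disc: "discriminatory \<sigma> TYPE('n::finite)"
    and R: "R > 0" and hc: "continuous_on UNIV h" and eps: "\<epsilon> > 0"
  shows "\<exists>F c. finite F \<and> F \<subseteq> \<int> \<times> \<int> \<and>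
           (\<forall>t\<in>{-R..R}. \<bar>h t - (\<Sum>p\<in>F. c p * \<sigma> (fst p * t + snd p))\<bar> < \<epsilon>)"
proof (rule ccontr)
  assume neg: "\<not> ?thesis"
  have cnt: "countable (\<int> \<times> \<int> :: (real \<times> real) set)"
    unfolding Ints_def by (intro countable_SIGMA countable_image) auto
  have ne: "(\<int> \<times> \<int> :: (real \<times> real) set) \<noteq> {}" by auto
  define e where "e = from_nat_into (\<int> \<times> \<int> :: (real \<times> real) set)"
  have re: "range e = \<int> \<times> \<int>" unfolding e_def by (rule range_from_nat_into[OF ne cnt])
  define \<phi> where "\<phi> i t = \<sigma> (fst (e i) * t + snd (e i))" for i t
  have phic: "continuous_on UNIV (\<phi> i)" for i
    unfolding \<phi>_def by (rule continuous_on_compose2[OF sc]) (auto intro!: continuous_intros)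
  show False
  proof (cases "\<forall>N \<eta>. \<eta> > 0 \<longrightarrow> (\<exists>p\<in>Mset R. FF R \<phi> N \<epsilon> h p < \<eta>)")
    case True
    have hyp: "\<And>N \<eta>. \<eta> > 0 \<Longrightarrow> \<exists>p\<in>Mset R. FF R \<phi> N \<epsilon> h p < \<eta>" using True by blast
    have "\<exists>\<rho>. real_distribution \<rho> \<and> (\<forall>i. (\<integral>u. Ee R (\<phi> i) u \<partial>\<rho>) = 0) \<and> (\<integral>u. Ee R h u \<partial>\<rho>) \<ge> \<epsilon>"
      by (rule limA[OF R _ hc]) (use phic hyp in auto)
    then obtain \<rho> where
      rho: "real_distribution \<rho>" "\<forall>i. (\<integral>u. Ee R (\<phi> i) u \<partial>\<rho>) = 0"
      "(\<integral>u. Ee R h u \<partial>\<rho>) \<ge> \<epsilon>" by (elim exE conjE)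
    show False
    proof (rule contraC[OF sc disc R hc eps rho(1) _ rho(3)])
      fix m k :: real assume "m \<in> \<int>" "k \<in> \<int>"
      then have "(m, k) \<in> range e" using re by auto
      then obtain i where "e i = (m, k)" by auto
      then have "(\<lambda>t. \<sigma> (m * t + k)) = \<phi> i" unfolding \<phi>_def by auto
      then show "(\<integral>u. Ee R (\<lambda>t. \<sigma> (m * t + k)) u \<partial>\<rho>) = 0" using rho(2) by simp
    qed
  next
    case False
    then obtain N \<eta> where "\<eta> > 0" "\<And>p. p \<in> Mset R \<Longrightarrow> FF R \<phi> N \<epsilon> h p \<ge> \<eta>"
      by (auto simp: not_less)
    from varB[OF R phic hc this] obtain c where
      c: "\<forall>t\<in>{-R..R}. \<bar>h t - (\<Sum>i<N. c i * \<phi> i t)\<bar> < \<epsilon>" by blast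
    define F where "F = e ` {..<N}"
    define c' where "c' p = (\<Sum>i\<in>{i\<in>{..<N}. e i = p}. c i)" for p
    have eqs: "(\<Sum>i<N. c i * \<phi> i t) = (\<Sum>p\<in>F. c' p * \<sigma> (fst p * t + snd p))" for t
    proof -
      have "(\<Sum>i<N. c i * \<phi> i t) = (\<Sum>p\<in>F. \<Sum>i\<in>{i\<in>{..<N}. e i = p}. c i * \<phi> i t)"
        unfolding F_def by (rule sum.image_gen) simp
      also have "\<dots> = (\<Sum>p\<in>F. c' p * \<sigma> (fst p * t + snd p))"
        unfolding c'_def sum_distrib_right
        by (intro sum.cong refl) (auto simp: \<phi>_def)
      finally show ?thesis .
    qed
    have fF: "finite F" "F \<subseteq> \<int> \<times> \<int>" unfolding F_def using re by auto
    have "\<forall>t\<in>{-R..R}. \<bar>h t - (\<Sum>p\<in>F. c' p * \<sigma> (fst p * t + snd p))\<bar> < \<epsilon>"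
      using c unfolding eqs by blast
    then have "\<exists>F c. finite F \<and> F \<subseteq> \<int> \<times> \<int> \<and>
           (\<forall>t\<in>{-R..R}. \<bar>h t - (\<Sum>p\<in>F. c p * \<sigma> (fst p * t + snd p))\<bar> < \<epsilon>)"
      using fF by blast
    then show False using neg by blast
  qed
qed

lemma ER_approx:
  fixes \<sigma> :: "real \<Rightarrow> real"
  assumes sc: "continuous_on UNIV \<sigma>" and disc: "discriminatory \<sigma> TYPE('n::finite)"
    and f: "f \<in> (ER :: (real ^ 'n \<Rightarrow> real) set)"
  shows "\<forall>K. compact K \<longrightarrow> (\<forall>\<epsilon>>0. \<exists>s\<in>NN \<sigma>. \<forall>x\<in>K. \<bar>s x - f x\<bar> < \<epsilon>)"
  using f
proof induction
  case (gen m)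
  show ?case
  proof (intro allI impI)
    fix K :: "(real ^ 'n) set" and \<epsilon> :: real
    assume K: "compact K" and eps: "\<epsilon> > 0"
    have "compact ((\<lambda>x. m \<bullet> x) ` K)"
      using K by (intro compact_continuous_image continuous_intros)
    then obtain B where B: "\<And>x. x \<in> K \<Longrightarrow> \<bar>m \<bullet> x\<bar> \<le> B"
      using compact_imp_bounded bounded_iff by (metis image_eqI real_norm_def)
    define R where "R = max 1 B"
    have R: "R > 0" unfolding R_def by simp
    obtain F c where Fc: "finite F" "F \<subseteq> \<int> \<times> \<int>"
      "\<forall>t\<in>{-R..R}. \<bar>exp t - (\<Sum>p\<in>F. c p * \<sigma> (fst p * t + snd p))\<bar> < \<epsilon>"
      using oneD[OF sc disc R continuous_on_exp[OF continuous_on_id] eps] by blast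
    define s where "s x = (\<Sum>p\<in>F. c p * \<sigma> ((fst p *\<^sub>R m) \<bullet> x + snd p))" for x
    have "s \<in> NN \<sigma>"
      unfolding s_def
    proof (rule NN_sum[OF Fc(1)])
      fix p assume "p \<in> F"
      then have p: "fst p \<in> \<int>" "snd p \<in> \<int>" using Fc(2) by auto
      have "fst p *\<^sub>R m \<in> int_vecs" using p(1) gen unfolding int_vecs_def by auto
      then show "(\<lambda>x. c p * \<sigma> ((fst p *\<^sub>R m) \<bullet> x + snd p)) \<in> NN \<sigma>"
        by (intro NN_scale NN_gen p(2))
    qed
    moreover have "\<bar>s x - exp (m \<bullet> x)\<bar> < \<epsilon>" if "x \<in> K" for x
    proof -
      have "m \<bullet> x \<in> {-R..R}" using B[OF that] unfolding R_def by auto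
      then have "\<bar>exp (m \<bullet> x) - (\<Sum>p\<in>F. c p * \<sigma> (fst p * (m \<bullet> x) + snd p))\<bar> < \<epsilon>" using Fc(3) by blast
      moreover have "s x = (\<Sum>p\<in>F. c p * \<sigma> (fst p * (m \<bullet> x) + snd p))"
        unfolding s_def by simp
      ultimately show ?thesis by simp
    qed
    ultimately show "\<exists>s\<in>NN \<sigma>. \<forall>x\<in>K. \<bar>s x - exp (m \<bullet> x)\<bar> < \<epsilon>" by blast
  qed
next
  case (scl f c)
  show ?case
  proof (intro allI impI)
    fix K :: "(real ^ 'n) set" and \<epsilon> :: real
    assume K: "compact K" and eps: "\<epsilon> > 0"
    show "\<exists>s\<in>NN \<sigma>. \<forall>x\<in>K. \<bar>s x - c * f x\<bar> < \<epsilon>"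
    proof (cases "c = 0")
      case True
      show ?thesis
        by (rule bexI[OF _ NN_zero]) (use True eps in simp)
    next
      case False
      then have "\<epsilon> / \<bar>c\<bar> > 0" using eps by simp
      then obtain s where s: "s \<in> NN \<sigma>" "\<forall>x\<in>K. \<bar>s x - f x\<bar> < \<epsilon> / \<bar>c\<bar>"
        using scl.IH K by blast
      have "\<bar>c * s x - c * f x\<bar> < \<epsilon>" if "x \<in> K" for x
      proof -
        have "c * s x - c * f x = c * (s x - f x)" by (simp add: algebra_simps)
        then have "\<bar>c * s x - c * f x\<bar> = \<bar>c\<bar> * \<bar>s x - f x\<bar>" by (simp only: abs_mult)
        also have "\<dots> < \<bar>c\<bar> * (\<epsilon> / \<bar>c\<bar>)"
        proof (rule mult_strict_left_mono)
          show "\<bar>s x - f x\<bar> < \<epsilon> / \<bar>c\<bar>" using s(2) that by blast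
          show "0 < \<bar>c\<bar>" using False by simp
        qed
        also have "\<dots> = \<epsilon>" using False by simp
        finally show ?thesis .
      qed
      then have "\<forall>x\<in>K. \<bar>(\<lambda>x. c * s x) x - c * f x\<bar> < \<epsilon>" by simp
      then show ?thesis by (rule bexI[OF _ NN_scale[OF s(1)]])
    qed
  qed
next
  case (add f g)
  show ?case
  proof (intro allI impI)
    fix K :: "(real ^ 'n) set" and \<epsilon> :: real
    assume K: "compact K" and eps: "\<epsilon> > 0"
    then have e2: "\<epsilon> / 2 > 0" by simp
    obtain s1 where s1: "s1 \<in> NN \<sigma>" "\<forall>x\<in>K. \<bar>s1 x - f x\<bar> < \<epsilon> / 2" using add.IH(1) K e2 by blast
    obtain s2 where s2: "s2 \<in> NN \<sigma>" "\<forall>x\<in>K. \<bar>s2 x - g x\<bar> < \<epsilon> / 2" using add.IH(2) K e2 by blast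
    have "\<bar>(s1 x + s2 x) - (f x + g x)\<bar> < \<epsilon>" if "x \<in> K" for x
    proof -
      have a: "\<bar>s1 x - f x\<bar> < \<epsilon> / 2" "\<bar>s2 x - g x\<bar> < \<epsilon> / 2" using s1(2) s2(2) that by auto
      have "\<bar>(s1 x + s2 x) - (f x + g x)\<bar> \<le> \<bar>s1 x - f x\<bar> + \<bar>s2 x - g x\<bar>"
        using abs_triangle_ineq[of "s1 x - f x" "s2 x - g x"] by (simp add: algebra_simps)
      then show ?thesis using a by linarith
    qed
    then have "\<forall>x\<in>K. \<bar>(\<lambda>x. s1 x + s2 x) x - (f x + g x)\<bar> < \<epsilon>" by simp
    then show "\<exists>s\<in>NN \<sigma>. \<forall>x\<in>K. \<bar>s x - (f x + g x)\<bar> < \<epsilon>"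
      by (rule bexI[OF _ NN_add[OF s1(1) s2(1)]])
  qed
qed

theorem lemma4p2p3:
  fixes \<sigma> :: "real \<Rightarrow> real"
  assumes "continuous_on UNIV \<sigma>"
    and "discriminatory \<sigma> TYPE('n::finite)"
  shows "\<forall>(K :: (real ^ 'n) set) g \<epsilon>. K \<noteq> {} \<and> compact K \<and> continuous_on UNIV g \<and> \<epsilon> > 0 \<longrightarrow>
           (\<exists>s \<in> NN \<sigma>. (SUP x\<in>K. \<bar>s x - g x\<bar>) < \<epsilon>)"
proof (intro allI impI)
  fix K :: "(real ^ 'n) set" and g :: "real ^ 'n \<Rightarrow> real" and \<epsilon> :: real
  assume H: "K \<noteq> {} \<and> compact K \<and> continuous_on UNIV g \<and> \<epsilon> > 0"
  then have K: "K \<noteq> {}" "compact K" and eps: "\<epsilon> > 0" by auto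
  have gc: "continuous_on K g" using H continuous_on_subset[of UNIV g K] by simp
  obtain f where f: "f \<in> ER" "\<forall>x\<in>K. \<bar>f x - g x\<bar> < \<epsilon> / 4"
    using ER_SW[OF K(2) gc, of "\<epsilon> / 4"] eps by auto
  obtain s where s: "s \<in> NN \<sigma>" "\<forall>x\<in>K. \<bar>s x - f x\<bar> < \<epsilon> / 4"
  proof -
    have "\<epsilon> / 4 > 0" using eps by simp
    then obtain s where "s \<in> NN \<sigma>" "\<forall>x\<in>K. \<bar>s x - f x\<bar> < \<epsilon> / 4"
      using ER_approx[OF assms f(1)] K(2) by blast
    then show ?thesis by (rule that)
  qed
  have "\<bar>s x - g x\<bar> \<le> \<epsilon> / 2" if "x \<in> K" for x
  proof -
    have a: "\<bar>f x - g x\<bar> < \<epsilon> / 4" "\<bar>s x - f x\<bar> < \<epsilon> / 4" using f(2) s(2) that by auto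
    have "\<bar>s x - g x\<bar> \<le> \<bar>s x - f x\<bar> + \<bar>f x - g x\<bar>"
      using abs_triangle_ineq[of "s x - f x" "f x - g x"] by simp
    then show ?thesis using a by linarith
  qed
  then have "(SUP x\<in>K. \<bar>s x - g x\<bar>) \<le> \<epsilon> / 2"
    by (intro cSUP_least K(1)) auto
  also have "\<dots> < \<epsilon>" using eps by simp
  finally show "\<exists>s \<in> NN \<sigma>. (SUP x\<in>K. \<bar>s x - g x\<bar>) < \<epsilon>" using s(1) by blast
qed


end
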